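(* Let $\mathbf G$ be a finite unitary group acting on a finite-dimensional complex inner product space $V$, $\mathbf x_0\in V$ a unit vector with $\mathbf G\mathbf x_0\neq\{\mathbf x_0\}$, and $X$ a generating set of $\mathbf G$ such that condition $(\ddagger)$ holds. Let $\delta$ be as defined in the context and let $S=\operatorname{Stab}_{\mathbf G}(\mathbf x_0)$. If $g\in\mathbf G$ and $\mathbf r\in V$ satisfy $\|\mathbf r-g^{-1}\mathbf x_0\|<\delta/3$, then either version (A) or (B) of the primitive decoding algorithm applied to $\mathbf r$ terminates in at most $\lfloor 6/\delta\rfloor$ steps and outputs $c_k\cdots c_1\in Sg$.
   Context: Condition $(\ddagger)$: for every $\mathbf w\in\mathbf G\mathbf x_0$ with $\mathbf w\neq\mathbf x_0$ there is $c\in X$ with $\|c\mathbf w-\mathbf x_0\|<\|\mathbf w-\mathbf x_0\|$. For a codeword $\mathbf w\in\mathbf G\mathbf x_0$, $\operatorname{MG}(\mathbf w)=\{c\in X\cup\{I\}:\|c\mathbf w-\mathbf x_0\|\le\|d\mathbf w-\mathbf x_0\|\text{ for all }d\in X\cup\{I\}\}$, and $\delta=\min\{\|\mathbf w-\mathbf x_0\|-\|c\mathbf w-\mathbf x_0\|:\mathbf w\in\mathbf G\mathbf x_0\setminus\{\mathbf x_0\},\ c\in\operatorname{MG}(\mathbf w)\}$. Primitive decoding algorithm: set $\mathbf r_0=\mathbf r$; given $\mathbf r_k$, if there is no $c\in X$ with $\|c\mathbf r_k-\mathbf x_0\|<\|\mathbf r_k-\mathbf x_0\|-\delta/3$, terminate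 and output $c_k\cdots c_1$; otherwise choose $c_{k+1}$ and set $\mathbf r_{k+1}=c_{k+1}\mathbf r_k$, where in version (A) $c_{k+1}\in X$ minimizes $\|c_{k+1}\mathbf r_k-\mathbf x_0\|$, and in version (B) $c_{k+1}$ is the first element of $X$ (in a fixed ordering) with $\|c_{k+1}\mathbf r_k-\mathbf x_0\|<\|\mathbf r_k-\mathbf x_0\|-\delta/3$. *)

theory Defs
  imports "HOL-Analysis.Analysis"
begin

text \<open>V is modelled as the standard complex inner product space complex^'n
  (norm = Euclidean/Hermitian norm); group elements are n x n complex matrices.\<close>

type_synonym 'n cmat = "complex ^'n ^'n"

definition conj_transpose :: "'n::finite cmat \<Rightarrow> 'n cmat" where
  "conj_transpose A = (\<chi> i j. cnj (A $ j $ i))"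

definition unitary_mat :: "'n::finite cmat \<Rightarrow> bool" where
  "unitary_mat A \<longleftrightarrow> conj_transpose A ** A = mat 1"

definition finite_unitary_group :: "'n::finite cmat set \<Rightarrow> bool" where
  "finite_unitary_group G \<longleftrightarrow> finite G \<and> mat 1 \<in> G
     \<and> (\<forall>a\<in>G. \<forall>b\<in>G. a ** b \<in> G)
     \<and> (\<forall>a\<in>G. matrix_inv a \<in> G \<and> a ** matrix_inv a = mat 1 \<and> matrix_inv a ** a = mat 1)
     \<and> (\<forall>a\<in>G. unitary_mat a)"

inductive_set generated :: "'n::finite cmat set \<Rightarrow> 'n cmat set" for X where
  gen_one: "mat 1 \<in> generated X"
| gen_mult: "x \<in> X \<Longrightarrow> a \<in> generated X \<Longrightarrow> x ** a \<in> generated X"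
| gen_inv: "x \<in> X \<Longrightarrow> a \<in> generated X \<Longrightarrow> matrix_inv x ** a \<in> generated X"

definition orbit :: "'n::finite cmat set \<Rightarrow> complex^'n \<Rightarrow> (complex^'n) set" where
  "orbit G x0 = (\<lambda>g. g *v x0) ` G"

definition stab :: "'n::finite cmat set \<Rightarrow> complex^'n \<Rightarrow> 'n cmat set" where
  "stab G x0 = {s \<in> G. s *v x0 = x0}"

definition cond_ddagger :: "'n::finite cmat set \<Rightarrow> 'n cmat set \<Rightarrow> complex^'n \<Rightarrow> bool" where
  "cond_ddagger G X x0 \<longleftrightarrow>
     (\<forall>w \<in> orbit G x0. w \<noteq> x0 \<longrightarrow> (\<exists>c\<in>X. norm (c *v w - x0) < norm (w - x0)))"

definition MG :: "'n::finite cmat set \<Rightarrow> complex^'n \<Rightarrow> complex^'n \<Rightarrow> 'n cmat set" where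
  "MG X x0 w = {c \<in> X \<union> {mat 1}. \<forall>d \<in> X \<union> {mat 1}. norm (c *v w - x0) \<le> norm (d *v w - x0)}"

definition delta :: "'n::finite cmat set \<Rightarrow> 'n cmat set \<Rightarrow> complex^'n \<Rightarrow> real" where
  "delta G X x0 = Min {norm (w - x0) - norm (c *v w - x0) | w c.
       w \<in> orbit G x0 - {x0} \<and> c \<in> MG X x0 w}"

definition improves :: "'n::finite cmat \<Rightarrow> complex^'n \<Rightarrow> real \<Rightarrow> complex^'n \<Rightarrow> bool" where
  "improves c x0 d r \<longleftrightarrow> norm (c *v r - x0) < norm (r - x0) - d / 3"

definition can_continue :: "'n::finite cmat set \<Rightarrow> complex^'n \<Rightarrow> real \<Rightarrow> complex^'n \<Rightarrow> bool" where
  "can_continue X x0 d r \<longleftrightarrow> (\<exists>c\<in>X. improves c x0 d r)"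

text \<open>Version (A): a list [c1,...,ck] of choices is a valid (partial) run from r.
  Any minimizer may be chosen (arbitrary tie-breaking).\<close>
fun run_A :: "'n::finite cmat set \<Rightarrow> complex^'n \<Rightarrow> real \<Rightarrow> complex^'n \<Rightarrow> 'n cmat list \<Rightarrow> bool" where
  "run_A X x0 d r [] = True"
| "run_A X x0 d r (c # cs) =
     (can_continue X x0 d r \<and> c \<in> X
      \<and> (\<forall>c'\<in>X. norm (c *v r - x0) \<le> norm (c' *v r - x0))
      \<and> run_A X x0 d (c *v r) cs)"

fun run_B :: "'n::finite cmat list \<Rightarrow> complex^'n \<Rightarrow> real \<Rightarrow> complex^'n \<Rightarrow> 'n cmat list \<Rightarrow> bool" where
  "run_B xs x0 d r [] = True"
| "run_B xs x0 d r (c # cs) =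
     (can_continue (set xs) x0 d r
      \<and> c = hd (filter (\<lambda>c'. improves c' x0 d r) xs)
      \<and> run_B xs x0 d (c *v r) cs)"

definition apply_run :: "'n::finite cmat list \<Rightarrow> complex^'n \<Rightarrow> complex^'n" where
  "apply_run cs r = fold (\<lambda>c v. c *v v) cs r"

definition run_product :: "'n::finite cmat list \<Rightarrow> 'n cmat" where
  "run_product cs = fold (\<lambda>c acc. c ** acc) cs (mat 1)"

end

theory Submission imports Defs begin

lemma nsq: "complex_of_real ((norm (x::complex^'n::finite))^2) = (\<Sum>i\<in>UNIV. x$i * cnj (x$i))"
proof -
  have "(norm x)^2 = (\<Sum>i\<in>UNIV. (cmod (x$i))^2)"
    unfolding norm_vec_def L2_set_def by (simp add: sum_nonneg)
  then show ?thesis by (simp only: of_real_sum complex_norm_square)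
qed

lemma unitary_norm:
  fixes A :: "'n::finite cmat"
  assumes "unitary_mat A"
  shows "norm (A *v v) = norm v"
proof -
  have U: "(\<Sum>i\<in>UNIV. cnj (A$i$k) * A$i$j) = (if k = j then 1 else 0)" for k j
  proof -
    have "(conj_transpose A ** A)$k$j = mat 1 $k$j" using assms unfolding unitary_mat_def by simp
    then show ?thesis by (simp add: matrix_matrix_mult_def conj_transpose_def mat_def)
  qed
  have "(\<Sum>i\<in>UNIV. (A *v v)$i * cnj ((A *v v)$i))
      = (\<Sum>i\<in>UNIV. \<Sum>k\<in>UNIV. \<Sum>j\<in>UNIV. (v$j * cnj (v$k)) * (cnj (A$i$k) * A$i$j))"
    by (simp add: matrix_vector_mult_def sum_distrib_left sum_distrib_right cnj_sum mult_ac)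
  also have "\<dots> = (\<Sum>k\<in>UNIV. \<Sum>i\<in>UNIV. \<Sum>j\<in>UNIV. (v$j * cnj (v$k)) * (cnj (A$i$k) * A$i$j))"
    by (rule sum.swap)
  also have "\<dots> = (\<Sum>k\<in>UNIV. \<Sum>j\<in>UNIV. \<Sum>i\<in>UNIV. (v$j * cnj (v$k)) * (cnj (A$i$k) * A$i$j))"
    by (rule sum.cong[OF refl], rule sum.swap)
  also have "\<dots> = (\<Sum>j\<in>UNIV. \<Sum>k\<in>UNIV. \<Sum>i\<in>UNIV. (v$j * cnj (v$k)) * (cnj (A$i$k) * A$i$j))"
    by (rule sum.swap)
  also have "\<dots> = (\<Sum>j\<in>UNIV. \<Sum>k\<in>UNIV. (v$j * cnj (v$k)) * (\<Sum>i\<in>UNIV. cnj (A$i$k) * A$i$j))"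
    by (simp add: sum_distrib_left)
  also have "\<dots> = (\<Sum>j\<in>UNIV. v$j * cnj (v$j))"
    by (simp add: U if_distrib cong: if_cong)
  finally have "complex_of_real ((norm (A *v v))^2) = complex_of_real ((norm v)^2)"
    by (simp only: nsq)
  then have "(norm (A *v v))^2 = (norm v)^2" using of_real_eq_iff by blast
  then show ?thesis by (simp add: power2_eq_iff_nonneg)
qed

lemma tri: "norm (a - c) \<le> norm (a - b) + norm (b - (c::'a::real_normed_vector))"
  by (rule norm_diff_triangle_le) auto

lemma ex_minimizer:
  assumes "finite A" "A \<noteq> {}"
  shows "\<exists>a\<in>A. \<forall>b\<in>A. (f a :: real) \<le> f b"
proof -
  have "Min (f ` A) \<in> f ` A" using assms by simp
  then obtain a where a: "a \<in> A" "f a = Min (f ` A)" by force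
  then show ?thesis using assms by (metis Min_le finite_imageI imageI)
qed

fun grun :: "'n::finite cmat set \<Rightarrow> complex^'n \<Rightarrow> real \<Rightarrow> complex^'n \<Rightarrow> 'n cmat list \<Rightarrow> bool" where
  "grun X x0 d r [] = True"
| "grun X x0 d r (c # cs) = (c \<in> X \<and> improves c x0 d r \<and> grun X x0 d (c *v r) cs)"

lemma apply_run_Nil[simp]: "apply_run [] r = r" by (simp add: apply_run_def)
lemma apply_run_Cons[simp]: "apply_run (c # cs) r = apply_run cs (c *v r)" by (simp add: apply_run_def)
lemma apply_run_snoc[simp]: "apply_run (cs @ [c]) r = c *v apply_run cs r" by (simp add: apply_run_def)

lemma rp_fold: "fold (\<lambda>c acc. c ** acc) cs (A::'n::finite cmat) = run_product cs ** A"
proof (induction cs arbitrary: A)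
  case Nil then show ?case by (simp add: run_product_def)
next
  case (Cons c cs)
  have "fold (\<lambda>c acc. c ** acc) (c # cs) A = run_product cs ** (c ** A)" by (simp add: Cons)
  moreover have "run_product (c # cs) = run_product cs ** c"
    using Cons[of c] by (simp add: run_product_def)
  ultimately show ?case by (simp add: matrix_mul_assoc)
qed

lemma run_product_Nil[simp]: "run_product [] = mat 1" by (simp add: run_product_def)
lemma run_product_Cons: "run_product (c # cs) = run_product cs ** c"
  using rp_fold[of cs c] by (simp add: run_product_def)

lemma run_A_snoc:
  "run_A X x0 d r (cs @ [c]) = (run_A X x0 d r cs \<and> can_continue X x0 d (apply_run cs r) \<and> c \<in> X
      \<and> (\<forall>c'\<in>X. norm (c *v apply_run cs r - x0) \<le> norm (c' *v apply_run cs r - x0)))"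
  by (induction cs arbitrary: r) auto

lemma run_B_snoc:
  "run_B xs x0 d r (cs @ [c]) = (run_B xs x0 d r cs \<and> can_continue (set xs) x0 d (apply_run cs r)
      \<and> c = hd (filter (\<lambda>c'. improves c' x0 d (apply_run cs r)) xs))"
  by (induction cs arbitrary: r) auto

lemma run_A_grun: "run_A X x0 d r cs \<Longrightarrow> grun X x0 d r cs"
proof (induction cs arbitrary: r)
  case (Cons c cs)
  then obtain c' where c': "c' \<in> X" "improves c' x0 d r" by (auto simp: can_continue_def)
  have m: "norm (c *v r - x0) \<le> norm (c' *v r - x0)" using Cons.prems c' by auto
  have "improves c x0 d r" using m c'(2) unfolding improves_def by linarith
  with Cons show ?case by auto
qed simp

lemma run_B_grun: "set xs = X \<Longrightarrow> run_B xs x0 d r cs \<Longrightarrow> grun X x0 d r cs"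
proof (induction cs arbitrary: r)
  case (Cons c cs)
  then have "filter (\<lambda>c'. improves c' x0 d r) xs \<noteq> []"
    by (auto simp: can_continue_def filter_empty_conv)
  then have "hd (filter (\<lambda>c'. improves c' x0 d r) xs) \<in> set (filter (\<lambda>c'. improves c' x0 d r) xs)"
    by (rule hd_in_set)
  then have "c \<in> set (filter (\<lambda>c'. improves c' x0 d r) xs)" using Cons.prems by simp
  then have "c \<in> X" "improves c x0 d r" using Cons.prems by auto
  with Cons show ?case by auto
qed simp

lemma exists_terminal:
  assumes "P []" "\<forall>cs. P cs \<longrightarrow> length cs \<le> N" "\<forall>cs. P cs \<and> Q cs \<longrightarrow> (\<exists>c. P (cs @ [c]))"
  shows "\<exists>cs. P cs \<and> \<not> Q cs"
proof -
  have "\<forall>cs. P cs \<and> N - length cs \<le> m \<longrightarrow> (\<exists>cs. P cs \<and> \<not> Q cs)" for m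
  proof (induction m)
    case 0
    show ?case
    proof (intro allI impI)
      fix cs assume h: "P cs \<and> N - length cs \<le> 0"
      show "\<exists>cs. P cs \<and> \<not> Q cs"
      proof (cases "Q cs")
        case True
        then obtain c where "P (cs @ [c])" using h assms(3) by blast
        then have "length (cs @ [c]) \<le> N" using assms(2) by blast
        then show ?thesis using h by simp
      qed (use h in blast)
    qed
  next
    case (Suc m)
    show ?case
    proof (intro allI impI)
      fix cs assume h: "P cs \<and> N - length cs \<le> Suc m"
      show "\<exists>cs. P cs \<and> \<not> Q cs"
      proof (cases "Q cs")
        case True
        then obtain c where c: "P (cs @ [c])" using h assms(3) by blast
        have "N - length (cs @ [c]) \<le> m" using h by simp arith
        then show ?thesis using Suc c by blast
      qed (use h in blast)
    qed
  qed
  then show ?thesis using assms(1) by blast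
qed

context
  fixes G X :: "'n::finite cmat set" and x0 :: "complex^'n"
  assumes FG: "finite_unitary_group G"
    and nx0: "norm x0 = 1"
    and ne: "orbit G x0 \<noteq> {x0}"
    and XG: "X \<subseteq> G"
    and dd: "cond_ddagger G X x0"
begin

lemma finG: "finite G" using FG unfolding finite_unitary_group_def by auto
lemma oneG: "mat 1 \<in> G" using FG unfolding finite_unitary_group_def by auto
lemma multG: "a \<in> G \<Longrightarrow> b \<in> G \<Longrightarrow> a ** b \<in> G" using FG unfolding finite_unitary_group_def by auto
lemma unitG: "a \<in> G \<Longrightarrow> unitary_mat a" using FG unfolding finite_unitary_group_def by auto
lemma finX: "finite X" using finG XG finite_subset by blast

lemma normG: "a \<in> G \<Longrightarrow> norm (a *v v) = norm v" using unitG unitary_norm by blast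

lemma MG_ex: "\<exists>c. c \<in> MG X x0 w"
proof -
  have "finite (X \<union> {mat 1})" "X \<union> {mat 1} \<noteq> {}" using finX by auto
  from ex_minimizer[OF this, of "\<lambda>c. norm (c *v w - x0)"]
  show ?thesis unfolding MG_def by blast
qed

definition "DS = {norm (w - x0) - norm (c *v w - x0) | w c.
       w \<in> orbit G x0 - {x0} \<and> c \<in> MG X x0 w}"

lemma DS_fin: "finite DS"
proof -
  have "DS \<subseteq> (\<lambda>(w,c). norm (w - x0) - norm (c *v w - x0)) ` (orbit G x0 \<times> (X \<union> {mat 1}))"
    unfolding DS_def MG_def by auto
  moreover have "finite (orbit G x0)" using finG unfolding orbit_def by simp
  then have "finite (orbit G x0 \<times> (X \<union> {mat 1}))" using finX by simp
  ultimately show ?thesis using finite_subset finite_imageI by blast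
qed

lemma DS_ne: "DS \<noteq> {}"
proof -
  have "mat 1 *v x0 \<in> orbit G x0" using oneG unfolding orbit_def by blast
  then obtain w where "w \<in> orbit G x0" "w \<noteq> x0" using ne by auto
  moreover obtain c where "c \<in> MG X x0 w" using MG_ex by blast
  ultimately show ?thesis unfolding DS_def by blast
qed

lemma delta_DS: "delta G X x0 = Min DS" unfolding delta_def DS_def by simp

lemma delta_le: "w \<in> orbit G x0 \<Longrightarrow> w \<noteq> x0 \<Longrightarrow> c \<in> MG X x0 w \<Longrightarrow>
   delta G X x0 \<le> norm (w - x0) - norm (c *v w - x0)"
  unfolding delta_DS by (rule Min_le[OF DS_fin]) (auto simp: DS_def)

lemma delta_pos: "delta G X x0 > 0"
proof -
  have "Min DS \<in> DS" using DS_fin DS_ne by simp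
  then obtain w c where wc: "Min DS = norm (w - x0) - norm (c *v w - x0)"
    "w \<in> orbit G x0" "w \<noteq> x0" "c \<in> MG X x0 w" unfolding DS_def by blast
  obtain c' where "c' \<in> X" "norm (c' *v w - x0) < norm (w - x0)" using dd wc unfolding cond_ddagger_def by blast
  then have "norm (c *v w - x0) < norm (w - x0)" using wc(4) unfolding MG_def by force
  then show ?thesis using wc(1) delta_DS by simp
qed

lemma delta_le_dist: "w \<in> orbit G x0 \<Longrightarrow> w \<noteq> x0 \<Longrightarrow> delta G X x0 \<le> norm (w - x0)"
  using MG_ex delta_le by (smt (verit) norm_ge_zero)

lemma key_a:
  assumes "h \<in> G" "norm (r - h *v x0) < delta G X x0 / 3"
    and "\<not> can_continue X x0 (delta G X x0) r"
  shows "h *v x0 = x0"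
proof (rule ccontr)
  let ?d = "delta G X x0"
  define w where "w = h *v x0"
  assume "h *v x0 \<noteq> x0"
  then have wn: "w \<noteq> x0" and wo: "w \<in> orbit G x0" using assms(1) unfolding w_def orbit_def by auto
  obtain c where c: "c \<in> MG X x0 w" using MG_ex by blast
  have dl: "?d \<le> norm (w - x0) - norm (c *v w - x0)" using delta_le[OF wo wn c] .
  have "c \<in> X"
  proof (rule ccontr)
    assume "c \<notin> X"
    then have "c = mat 1" using c unfolding MG_def by auto
    then show False using dl delta_pos by simp
  qed
  then have cG: "c \<in> G" using XG by auto
  have "norm (c *v r - c *v w) = norm (r - w)"
    using normG[OF cG, of "r - w"] by (simp add: matrix_vector_mult_diff_distrib)
  moreover have "norm (c *v r - x0) \<le> norm (c *v r - c *v w) + norm (c *v w - x0)"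
    by (rule tri)
  moreover have "norm (w - x0) \<le> norm (w - r) + norm (r - x0)" by (rule tri)
  moreover have "norm (w - r) = norm (r - w)" by (rule norm_minus_commute)
  moreover have "norm (r - w) < ?d / 3" using assms(2) w_def by simp
  ultimately have "improves c x0 ?d r" unfolding improves_def using dl by linarith
  then show False using assms(3) \<open>c \<in> X\<close> unfolding can_continue_def by blast
qed

lemma key_b:
  assumes "h \<in> G" "norm (r - h *v x0) < delta G X x0 / 3"
    and "improves c x0 (delta G X x0) r"
  shows "norm (r - x0) > 2 * delta G X x0 / 3"
proof -
  let ?d = "delta G X x0"
  define w where "w = h *v x0"
  have wo: "w \<in> orbit G x0" using assms(1) unfolding w_def orbit_def by auto
  have r1: "norm (r - x0) > ?d / 3" using assms(3) unfolding improves_def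
    by (smt (verit) norm_ge_zero)
  have wn: "w \<noteq> x0" using r1 assms(2) w_def by auto
  have "?d \<le> norm (w - x0)" using delta_le_dist[OF wo wn] .
  moreover have "norm (w - x0) \<le> norm (w - r) + norm (r - x0)" by (rule tri)
  moreover have "norm (w - r) = norm (r - w)" by (rule norm_minus_commute)
  moreover have "norm (r - w) < ?d / 3" using assms(2) w_def by simp
  ultimately show ?thesis by linarith
qed

lemma main_ind:
  assumes "grun X x0 (delta G X x0) r cs" "h \<in> G" "norm (r - h *v x0) < delta G X x0 / 3"
  shows "(cs \<noteq> [] \<longrightarrow> norm (r - x0) > (real (length cs) + 1) * delta G X x0 / 3)
       \<and> (\<not> can_continue X x0 (delta G X x0) (apply_run cs r) \<longrightarrow> (run_product cs ** h) *v x0 = x0)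
       \<and> run_product cs \<in> G"
  using assms
proof (induction cs arbitrary: r h)
  case Nil
  then show ?case using key_a oneG by auto
next
  case (Cons c cs)
  let ?d = "delta G X x0"
  have c: "c \<in> X" "improves c x0 ?d r" "grun X x0 ?d (c *v r) cs" using Cons.prems by auto
  have cG: "c \<in> G" using c XG by auto
  have hG: "c ** h \<in> G" using multG cG Cons.prems by auto
  have "norm (c *v r - (c ** h) *v x0) = norm (r - h *v x0)"
    using normG[OF cG, of "r - h *v x0"]
    by (simp add: matrix_vector_mult_diff_distrib matrix_vector_mul_assoc)
  then have n: "norm (c *v r - (c ** h) *v x0) < ?d / 3" using Cons.prems by simp
  note IH = Cons.IH[OF c(3) hG n]
  have p1: "norm (r - x0) > (real (length (c # cs)) + 1) * ?d / 3"
  proof (cases "cs = []")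
    case True
    then show ?thesis using key_b[OF Cons.prems(2,3) c(2)] by simp
  next
    case False
    then have "norm (c *v r - x0) > (real (length cs) + 1) * ?d / 3" using IH by blast
    then show ?thesis using c(2) unfolding improves_def by (simp add: algebra_simps)
  qed
  have p2: "\<not> can_continue X x0 ?d (apply_run (c # cs) r) \<longrightarrow> (run_product (c # cs) ** h) *v x0 = x0"
    using IH by (simp add: run_product_Cons matrix_mul_assoc)
  have p3: "run_product (c # cs) \<in> G" using IH multG cG by (simp add: run_product_Cons)
  show ?case using p1 p2 p3 by blast
qed

end

theorem mainTheorem10:
  fixes G X :: "'n::finite cmat set" and x0 r :: "complex^'n" and g :: "'n cmat"
  assumes "finite_unitary_group G"
    and "norm x0 = 1"
    and "orbit G x0 \<noteq> {x0}"
    and "X \<subseteq> G" and "generated X = G"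
    and "cond_ddagger G X x0"
    and "g \<in> G"
    and "norm (r - matrix_inv g *v x0) < delta G X x0 / 3"
  shows
    \<comment> \<open>Version (A): every run has at most floor(6/delta) steps, a terminated run exists,
        and every terminated run outputs an element of S g\<close>
    "(\<forall>cs. run_A X x0 (delta G X x0) r cs \<longrightarrow> int (length cs) \<le> \<lfloor>6 / delta G X x0\<rfloor>)
   \<and> (\<exists>cs. run_A X x0 (delta G X x0) r cs
           \<and> \<not> can_continue X x0 (delta G X x0) (apply_run cs r))
   \<and> (\<forall>cs. run_A X x0 (delta G X x0) r cs
           \<and> \<not> can_continue X x0 (delta G X x0) (apply_run cs r)
           \<longrightarrow> run_product cs \<in> (\<lambda>s. s ** g) ` stab G x0)
   \<and> (\<forall>xs. distinct xs \<and> set xs = X \<longrightarrow>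
        (\<forall>cs. run_B xs x0 (delta G X x0) r cs \<longrightarrow> int (length cs) \<le> \<lfloor>6 / delta G X x0\<rfloor>)
      \<and> (\<exists>cs. run_B xs x0 (delta G X x0) r cs
           \<and> \<not> can_continue X x0 (delta G X x0) (apply_run cs r))
      \<and> (\<forall>cs. run_B xs x0 (delta G X x0) r cs
           \<and> \<not> can_continue X x0 (delta G X x0) (apply_run cs r)
           \<longrightarrow> run_product cs \<in> (\<lambda>s. s ** g) ` stab G x0))"
proof -
  let ?d = "delta G X x0"
  define h where "h = matrix_inv g"
  have hG: "h \<in> G" and hg: "h ** g = mat 1"
    using assms(1,7) unfolding h_def finite_unitary_group_def by auto
  note A = assms(1,2,3,4,6)
  have dpos: "?d > 0" using delta_pos[OF A] .
  have eps: "norm (r - h *v x0) < ?d / 3" using assms(8) h_def by simp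
  have "norm (h *v x0) = 1" using normG[OF A hG] assms(2) by simp
  then have "norm (h *v x0 - x0) \<le> 2" using norm_triangle_ineq4[of "h *v x0" x0] assms(2) by simp
  then have r0: "norm (r - x0) < 2 + ?d / 3" using tri[of r x0 "h *v x0"] eps by linarith
  have G1: "int (length cs) \<le> \<lfloor>6 / ?d\<rfloor>" if "grun X x0 ?d r cs" for cs
  proof (cases "cs = []")
    case True
    then show ?thesis using dpos by simp
  next
    case False
    then have "(real (length cs) + 1) * ?d / 3 < norm (r - x0)"
      using main_ind[OF A that hG eps] by blast
    then have "real (length cs) * ?d < 6" using r0 by (simp add: algebra_simps)
    then have "real (length cs) \<le> 6 / ?d" using dpos by (simp add: pos_le_divide_eq less_imp_le)
    then show ?thesis by (simp add: le_floor_iff)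
  qed
  have G2: "run_product cs \<in> (\<lambda>s. s ** g) ` stab G x0"
    if "grun X x0 ?d r cs" "\<not> can_continue X x0 ?d (apply_run cs r)" for cs
  proof -
    have m: "(run_product cs ** h) *v x0 = x0" "run_product cs \<in> G"
      using main_ind[OF A that(1) hG eps] that(2) by auto
    have "run_product cs ** h \<in> stab G x0" using m multG[OF A m(2) hG] unfolding stab_def by auto
    moreover have "(run_product cs ** h) ** g = run_product cs"
      by (simp add: hg flip: matrix_mul_assoc)
    ultimately show ?thesis by (metis image_eqI)
  qed
  define N where "N = nat \<lfloor>6 / ?d\<rfloor>"
  have lenN: "length cs \<le> N" if "grun X x0 ?d r cs" for cs
    using G1[OF that] unfolding N_def by linarith
  have EA: "\<exists>cs. run_A X x0 ?d r cs \<and> \<not> can_continue X x0 ?d (apply_run cs r)"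
  proof (rule exists_terminal[where N = N])
    show "\<forall>cs. run_A X x0 ?d r cs \<longrightarrow> length cs \<le> N" using lenN run_A_grun by metis
    show "\<forall>cs. run_A X x0 ?d r cs \<and> can_continue X x0 ?d (apply_run cs r) \<longrightarrow> (\<exists>c. run_A X x0 ?d r (cs @ [c]))"
    proof (intro allI impI)
      fix cs assume h: "run_A X x0 ?d r cs \<and> can_continue X x0 ?d (apply_run cs r)"
      then have "X \<noteq> {}" unfolding can_continue_def by auto
      moreover have "finite X" using finX[OF A] .
      ultimately obtain c where "c \<in> X" "\<forall>c'\<in>X. norm (c *v apply_run cs r - x0) \<le> norm (c' *v apply_run cs r - x0)"
        using ex_minimizer[of X "\<lambda>c. norm (c *v apply_run cs r - x0)"] by blast
      then show "\<exists>c. run_A X x0 ?d r (cs @ [c])" using h by (auto simp: run_A_snoc)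
    qed
  qed simp
  have EB: "\<exists>cs. run_B xs x0 ?d r cs \<and> \<not> can_continue X x0 ?d (apply_run cs r)" if "set xs = X" for xs
  proof (rule exists_terminal[where N = N])
    show "\<forall>cs. run_B xs x0 ?d r cs \<longrightarrow> length cs \<le> N" using lenN run_B_grun[OF that] by metis
    show "\<forall>cs. run_B xs x0 ?d r cs \<and> can_continue X x0 ?d (apply_run cs r) \<longrightarrow> (\<exists>c. run_B xs x0 ?d r (cs @ [c]))"
    proof (intro allI impI)
      fix cs assume h: "run_B xs x0 ?d r cs \<and> can_continue X x0 ?d (apply_run cs r)"
      have "run_B xs x0 ?d r (cs @ [hd (filter (\<lambda>c'. improves c' x0 ?d (apply_run cs r)) xs)])"
        unfolding run_B_snoc using h that by simp
      then show "\<exists>c. run_B xs x0 ?d r (cs @ [c])" by blast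
    qed
  qed simp
  have P1: "\<forall>cs. run_A X x0 ?d r cs \<longrightarrow> int (length cs) \<le> \<lfloor>6 / ?d\<rfloor>"
    using G1 run_A_grun by blast
  have P2: "\<forall>cs. run_A X x0 ?d r cs \<and> \<not> can_continue X x0 ?d (apply_run cs r)
           \<longrightarrow> run_product cs \<in> (\<lambda>s. s ** g) ` stab G x0"
    using G2 run_A_grun by blast
  have P3: "\<forall>xs. distinct xs \<and> set xs = X \<longrightarrow>
        (\<forall>cs. run_B xs x0 ?d r cs \<longrightarrow> int (length cs) \<le> \<lfloor>6 / ?d\<rfloor>)
      \<and> (\<exists>cs. run_B xs x0 ?d r cs \<and> \<not> can_continue X x0 ?d (apply_run cs r))
      \<and> (\<forall>cs. run_B xs x0 ?d r cs \<and> \<not> can_continue X x0 ?d (apply_run cs r)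
           \<longrightarrow> run_product cs \<in> (\<lambda>s. s ** g) ` stab G x0)"
  proof (rule allI, rule impI)
    fix xs assume xs: "distinct xs \<and> set xs = X"
    have a: "\<forall>cs. run_B xs x0 ?d r cs \<longrightarrow> int (length cs) \<le> \<lfloor>6 / ?d\<rfloor>"
      using G1 run_B_grun xs by blast
    have b: "\<exists>cs. run_B xs x0 ?d r cs \<and> \<not> can_continue X x0 ?d (apply_run cs r)"
      using EB xs by blast
    have c: "\<forall>cs. run_B xs x0 ?d r cs \<and> \<not> can_continue X x0 ?d (apply_run cs r)
           \<longrightarrow> run_product cs \<in> (\<lambda>s. s ** g) ` stab G x0"
      using G2 run_B_grun xs by blast
    show "(\<forall>cs. run_B xs x0 ?d r cs \<longrightarrow> int (length cs) \<le> \<lfloor>6 / ?d\<rfloor>)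
      \<and> (\<exists>cs. run_B xs x0 ?d r cs \<and> \<not> can_continue X x0 ?d (apply_run cs r))
      \<and> (\<forall>cs. run_B xs x0 ?d r cs \<and> \<not> can_continue X x0 ?d (apply_run cs r)
           \<longrightarrow> run_product cs \<in> (\<lambda>s. s ** g) ` stab G x0)"
      using a b c by (intro conjI)
  qed
  show ?thesis using P1 EA P2 P3 by (intro conjI)
qed

end
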